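(* Let $w_1,w_2,\ldots$ be i.i.d. random variables from a distribution $\mathbb{P}_w\in\mathcal{D}_1\cup\mathcal{D}_2$. Then $\lim_{n\to\infty}\mathbb{P}\bigl(\sum_{i=1}^n w_i^2\ge\frac{1}{2}n\bigr)=1$.
   Context: For $s>0$, $\mathcal{D}_s$ is the class of distributions of $\xi$ with $\mathbb{E}[\xi]=0$ and $1\le\mathbb{E}[|\xi|^s]\le2$. *)

theory Defs
  imports "HOL-Probability.Probability"
begin

definition Dclass :: "real \<Rightarrow> real measure set" where
  "Dclass s = {\<mu>. prob_space \<mu> \<and> sets \<mu> = sets borel \<and>
      integrable \<mu> (\<lambda>x. x) \<and> (\<integral>x. x \<partial>\<mu>) = 0 \<and>
      1 \<le> (\<integral>\<^sup>+x. ennreal (\<bar>x\<bar> powr s) \<partial>\<mu>) \<and>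
      (\<integral>\<^sup>+x. ennreal (\<bar>x\<bar> powr s) \<partial>\<mu>) \<le> 2}"

end

theory Submission
  imports Defs
begin

lemma powr2_abs: "\<bar>x::real\<bar> powr 2 = x^2"
  by simp

lemma two_abs_le: "2 * \<bar>x::real\<bar> \<le> x^2 + 1"
proof -
  have "0 \<le> (\<bar>x\<bar> - 1)^2" by simp
  then show ?thesis by (simp add: power2_eq_square algebra_simps)
qed

theorem lemmaA9:
  fixes M :: "'a measure" and w :: "nat \<Rightarrow> 'a \<Rightarrow> real"
  assumes "prob_space M"
    and "\<And>i. i \<ge> 1 \<Longrightarrow> w i \<in> borel_measurable M"
    and "prob_space.indep_vars M (\<lambda>_. borel) w {1..}"
    and "\<And>i. i \<ge> 1 \<Longrightarrow> distr M borel (w i) = distr M borel (w 1)"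
    and "distr M borel (w 1) \<in> Dclass 1 \<union> Dclass 2"
  shows "(\<lambda>n. measure M {x \<in> space M. (\<Sum>i=1..n. (w i x)\<^sup>2) \<ge> real n / 2})
           \<longlonglongrightarrow> 1"
proof -
  interpret prob_space M by fact
  define \<mu> where "\<mu> = distr M borel (w 1)"
  have wm: "\<And>i. i \<ge> 1 \<Longrightarrow> w i \<in> borel_measurable M" by fact
  have w1m[measurable]: "w 1 \<in> borel_measurable M" using wm by simp
  have w1m'[measurable]: "w (Suc 0) \<in> borel_measurable M" using wm by simp
  have mu_prob: "prob_space \<mu>" unfolding \<mu>_def by (rule prob_space_distr) simp
  interpret mu: prob_space \<mu> by fact
  have sets_mu[measurable_cong]: "sets \<mu> = sets borel" unfolding \<mu>_def by simp
  have sq1: "1 \<le> (\<integral>\<^sup>+x. ennreal (x^2) \<partial>\<mu>)"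
  proof -
    from assms(5) consider "\<mu> \<in> Dclass 1" | "\<mu> \<in> Dclass 2" unfolding \<mu>_def by blast
    then show ?thesis
    proof cases
      case 2 then show ?thesis by (simp add: Dclass_def powr2_abs)
    next
      case 1
      then have h: "1 \<le> (\<integral>\<^sup>+x. ennreal \<bar>x\<bar> \<partial>\<mu>)" by (simp add: Dclass_def)
      have "2 \<le> 2 * (\<integral>\<^sup>+x. ennreal \<bar>x\<bar> \<partial>\<mu>)"
        using mult_left_mono[OF h, of "2::ennreal"] by simp
      also have "\<dots> = (\<integral>\<^sup>+x. ennreal (2*\<bar>x\<bar>) \<partial>\<mu>)"
        by (subst nn_integral_cmult[symmetric]) (auto simp: ennreal_mult)
      also have "\<dots> \<le> (\<integral>\<^sup>+x. ennreal (x^2) + 1 \<partial>\<mu>)"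
        apply (rule nn_integral_mono)
        using two_abs_le by (metis ennreal_leI ennreal_plus ennreal_1 zero_le_power2 zero_le_one)
      also have "\<dots> = (\<integral>\<^sup>+x. ennreal (x^2) \<partial>\<mu>) + 1"
        by (subst nn_integral_add) (auto simp: mu.emeasure_space_1)
      finally have "2 \<le> (\<integral>\<^sup>+x. ennreal (x^2) \<partial>\<mu>) + 1" .
      then show ?thesis
        by (cases "(\<integral>\<^sup>+x. ennreal (x^2) \<partial>\<mu>)")
           (auto simp flip: ennreal_plus ennreal_1 simp del: ennreal_plus)
    qed
  qed
  have inc: "incseq (\<lambda>K::nat. \<lambda>x::real. ennreal (min (x^2) (real K)))"
    unfolding incseq_def le_fun_def by (auto intro!: ennreal_leI)
  have pw: "(SUP K::nat. ennreal (min (x^2) (real K))) = ennreal (x^2)" for x :: real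
  proof (rule antisym)
    show "(SUP K::nat. ennreal (min (x^2) (real K))) \<le> ennreal (x^2)"
      by (rule SUP_least) (auto intro!: ennreal_leI)
    have "ennreal (min (x^2) (real (nat \<lceil>x^2\<rceil>))) = ennreal (x^2)"
      by (auto simp: min_def)
    then show "ennreal (x^2) \<le> (SUP K::nat. ennreal (min (x^2) (real K)))"
      by (metis SUP_upper UNIV_I)
  qed
  have SUPeq: "(SUP K::nat. (\<integral>\<^sup>+x. ennreal (min (x^2) (real K)) \<partial>\<mu>)) = (\<integral>\<^sup>+x. ennreal (x^2) \<partial>\<mu>)"
    using nn_integral_monotone_convergence_SUP[OF inc, of \<mu>] by (simp add: pw)
  then have "ennreal (1/2) < (SUP K::nat. (\<integral>\<^sup>+x. ennreal (min (x^2) (real K)) \<partial>\<mu>))"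
  proof -
    have "ennreal (1/2) < ennreal 1" by (rule ennreal_lessI) auto
    then have "ennreal (1/2) < 1" by simp
    then show ?thesis using sq1 SUPeq by (metis order_less_le_trans)
  qed
  then obtain K :: nat where K: "ennreal (1/2) < (\<integral>\<^sup>+x. ennreal (min (x^2) (real K)) \<partial>\<mu>)"
    by (auto simp: less_SUP_iff)
  define f where "f = (\<lambda>x::real. min (x^2) (real K))"
  have fm[measurable]: "f \<in> borel_measurable borel" unfolding f_def by simp
  have f0: "0 \<le> f x" and fK: "f x \<le> real K" and fsq: "f x \<le> x^2" for x
    unfolding f_def by auto
  have fint: "integrable \<mu> f"
    by (rule mu.integrable_const_bound[where B="real K"]) (auto simp: f0 fK)
  define m where "m = integral\<^sup>L \<mu> f"
  have "ennreal (1/2) < ennreal m"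
    using K nn_integral_eq_integral[OF fint] f0 unfolding m_def f_def by simp
  then have m_half: "1/2 < m" by (subst (asm) ennreal_less_iff) auto
  have m0: "0 \<le> m" unfolding m_def using f0 by simp
  have mK: "m \<le> real K"
  proof -
    have "m \<le> integral\<^sup>L \<mu> (\<lambda>_. real K)" unfolding m_def
      by (rule integral_mono[OF fint]) (auto simp: fK)
    then show ?thesis by (simp add: mu.prob_space)
  qed
  have hm: "(\<integral>x. f (w i x) \<partial>M) = m" if "i \<ge> 1" for i
  proof -
    have "m = integral\<^sup>L (distr M borel (w i)) f" unfolding m_def \<mu>_def using assms(4)[OF that] by simp
    also have "\<dots> = (\<integral>x. f (w i x) \<partial>M)" by (rule integral_distr) (use wm[OF that] in auto)
    finally show ?thesis by simp
  qed
  define Z where "Z = (\<lambda>i x. f (w i x) - m)"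
  have Zm: "Z i \<in> borel_measurable M" if "i \<ge> 1" for i
    unfolding Z_def using wm[OF that] by measurable
  have Zb: "\<bar>Z i x\<bar> \<le> real K" for i x
    unfolding Z_def using f0[of "w i x"] fK[of "w i x"] m0 mK by auto
  have Zint: "integrable M (Z i)" if "i \<ge> 1" for i
    by (rule integrable_const_bound[where B="real K"]) (auto simp: Zb Zm[OF that])
  have ZE: "(\<integral>x. Z i x \<partial>M) = 0" if "i \<ge> 1" for i
  proof -
    have "integrable M (\<lambda>x. f (w i x))"
      by (rule integrable_const_bound[where B="real K"]) (use wm[OF that] f0 fK in auto)
    then show ?thesis unfolding Z_def using hm[OF that] by (simp add: prob_space)
  qed
  have indZ: "indep_vars (\<lambda>_. borel) Z {1..}"
    unfolding Z_def
    by (rule indep_vars_compose2[OF assms(3), where Y="\<lambda>_ y. f y - m"]) auto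
  have ZZ: "(\<integral>x. Z i x * Z j x \<partial>M) = 0" if "i \<ge> 1" "j \<ge> 1" "i \<noteq> j" for i j
  proof -
    have ind: "indep_vars (\<lambda>_. borel) Z {i,j}"
      by (rule indep_vars_subset[OF indZ]) (use that in auto)
    have "(\<integral>x. (\<Prod>k\<in>{i,j}. Z k x) \<partial>M) = (\<Prod>k\<in>{i,j}. \<integral>x. Z k x \<partial>M)"
      by (rule indep_vars_lebesgue_integral) (use ind Zint that in auto)
    then show ?thesis using that ZE by simp
  qed
  have ZZint: "integrable M (\<lambda>x. Z i x * Z j x)" if "i \<ge> 1" "j \<ge> 1" for i j
  proof (rule integrable_const_bound[where B="real K * real K"])
    show "AE x in M. norm (Z i x * Z j x) \<le> real K * real K"
      by (auto simp: abs_mult intro!: mult_mono Zb)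
  qed (use Zm[OF that(1)] Zm[OF that(2)] in auto)
  define S where "S = (\<lambda>n x. \<Sum>i=1..n. Z i x)"
  have Ssq: "(S n x)^2 = (\<Sum>i=1..n. \<Sum>j=1..n. Z i x * Z j x)" for n x
    unfolding S_def power2_eq_square by (rule sum_product)
  have ES: "(\<integral>x. (S n x)^2 \<partial>M) \<le> real n * (real K)^2" for n
  proof -
    have "(\<integral>x. (S n x)^2 \<partial>M) = (\<Sum>i=1..n. \<Sum>j=1..n. \<integral>x. Z i x * Z j x \<partial>M)"
    proof -
      have "(\<integral>x. (S n x)^2 \<partial>M) = (\<Sum>i=1..n. \<integral>x. (\<Sum>j=1..n. Z i x * Z j x) \<partial>M)"
        unfolding Ssq by (rule Bochner_Integration.integral_sum) (auto intro!: integrable_sum ZZint)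
      also have "\<dots> = (\<Sum>i=1..n. \<Sum>j=1..n. \<integral>x. Z i x * Z j x \<partial>M)"
        by (rule sum.cong[OF refl], rule Bochner_Integration.integral_sum) (auto intro!: ZZint)
      finally show ?thesis .
    qed
    also have "\<dots> = (\<Sum>i=1..n. \<integral>x. Z i x * Z i x \<partial>M)"
    proof (rule sum.cong[OF refl])
      fix i assume i: "i \<in> {1..n}"
      have "(\<Sum>j=1..n. \<integral>x. Z i x * Z j x \<partial>M) = (\<Sum>j=1..n. if i = j then \<integral>x. Z i x * Z i x \<partial>M else 0)"
        by (rule sum.cong[OF refl]) (use i ZZ in auto)
      also have "\<dots> = \<integral>x. Z i x * Z i x \<partial>M" using i by (simp add: sum.delta)
      finally show "(\<Sum>j=1..n. \<integral>x. Z i x * Z j x \<partial>M) = \<integral>x. Z i x * Z i x \<partial>M" .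
    qed
    also have "\<dots> \<le> (\<Sum>i=1..n. (real K)^2)"
    proof (rule sum_mono)
      fix i assume i: "i \<in> {1..n}"
      have "(\<integral>x. Z i x * Z i x \<partial>M) \<le> (\<integral>x. (real K)^2 \<partial>M)"
      proof (rule integral_mono)
        fix x
        have "Z i x * Z i x = \<bar>Z i x\<bar> * \<bar>Z i x\<bar>" by (simp add: abs_mult_self_eq)
        also have "\<dots> \<le> real K * real K" by (rule mult_mono[OF Zb Zb]) auto
        finally show "Z i x * Z i x \<le> (real K)^2" by (simp add: power2_eq_square)
      qed (use i ZZint in auto)
      then show "(\<integral>x. Z i x * Z i x \<partial>M) \<le> (real K)^2" by (simp add: prob_space)
    qed
    also have "\<dots> = real n * (real K)^2" by simp
    finally show ?thesis .
  qed
  define c where "c = m - 1/2"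
  have c0: "0 < c" using m_half unfolding c_def by simp
  have bound: "1 - (real K)^2 / (c^2) / real n \<le> measure M {x \<in> space M. (\<Sum>i=1..n. (w i x)\<^sup>2) \<ge> real n / 2}"
    if n1: "n \<ge> 1" for n
  proof -
    let ?A = "{x \<in> space M. (\<Sum>i=1..n. (w i x)\<^sup>2) \<ge> real n / 2}"
    let ?B = "{x \<in> space M. (real n * c)^2 \<le> (S n x)^2}"
    have Sm: "S n \<in> borel_measurable M" unfolding S_def
      by (rule borel_measurable_sum) (auto intro: Zm)
    have sm: "(\<lambda>x. \<Sum>i=1..n. (w i x)\<^sup>2) \<in> borel_measurable M"
      by (rule borel_measurable_sum) (use wm in auto)
    have Aev: "?A \<in> events" using sm by measurable
    have Bev: "?B \<in> events" using Sm by measurable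
    have sub: "space M - ?A \<subseteq> ?B"
    proof
      fix x assume x: "x \<in> space M - ?A"
      then have lt: "(\<Sum>i=1..n. (w i x)\<^sup>2) < real n / 2" by auto
      have "(\<Sum>i=1..n. f (w i x)) \<le> (\<Sum>i=1..n. (w i x)\<^sup>2)" by (rule sum_mono) (simp add: fsq)
      moreover have "S n x = (\<Sum>i=1..n. f (w i x)) - real n * m"
        unfolding S_def Z_def by (simp add: sum_subtractf)
      ultimately have "S n x < - (real n * c)" using lt unfolding c_def by (simp add: algebra_simps)
      then have "real n * c \<le> - S n x" by simp
      moreover have "0 \<le> real n * c" using c0 by simp
      ultimately have "(real n * c)^2 \<le> (- S n x)^2" by (rule power_mono)
      then show "x \<in> ?B" using x by simp
    qed
    have pos: "0 < (real n * c)^2" using c0 n1 by simp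
    have Sint: "integrable M (\<lambda>x. (S n x)^2)"
      unfolding Ssq by (intro Bochner_Integration.integrable_sum ZZint) auto
    have "measure M ?B \<le> (\<integral>x. (S n x)^2 \<partial>M) / (real n * c)^2"
      by (rule integral_Markov_inequality_measure[OF Sint _ _ pos, where A="space M"]) auto
    also have "\<dots> \<le> real n * (real K)^2 / (real n * c)^2"
      by (rule divide_right_mono[OF ES]) simp
    also have "\<dots> = (real K)^2 / (c^2) / real n"
      using n1 by (simp add: power2_eq_square field_simps)
    finally have mB: "measure M ?B \<le> (real K)^2 / (c^2) / real n" .
    have "measure M (space M - ?A) \<le> measure M ?B"
      by (rule finite_measure_mono[OF sub Bev])
    moreover have "measure M (space M - ?A) = 1 - measure M ?A" using prob_compl[OF Aev] by simp
    ultimately show ?thesis using mB by simp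
  qed
  have lim: "(\<lambda>n. 1 - (real K)^2 / (c^2) / real n) \<longlonglongrightarrow> 1"
    using tendsto_diff[OF tendsto_const lim_const_over_n[of "(real K)^2 / (c^2)"]] by simp
  show ?thesis
  proof (rule tendsto_sandwich[OF _ _ lim tendsto_const])
    show "\<forall>\<^sub>F n in sequentially. 1 - (real K)^2 / (c^2) / real n \<le> measure M {x \<in> space M. (\<Sum>i=1..n. (w i x)\<^sup>2) \<ge> real n / 2}"
      using eventually_ge_at_top[of "1::nat"] by eventually_elim (rule bound)
    show "\<forall>\<^sub>F n in sequentially. measure M {x \<in> space M. (\<Sum>i=1..n. (w i x)\<^sup>2) \<ge> real n / 2} \<le> 1"
      by (auto simp: measure_le_1)
  qed
qed

end
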